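(* Let $A=\begin{pmatrix}A_I & A_{I\Gamma}\\ A_{\Gamma I} & A_\Gamma\end{pmatrix}$ be symmetric positive definite ($A_{I\Gamma}=A_{\Gamma I}^\top$, $A_\Gamma\in\mathbb{R}^{n_\Gamma\times n_\Gamma}$), $S_\Gamma=A_\Gamma-A_{\Gamma I}A_I^{-1}A_{I\Gamma}$, $S_I=A_I-A_{I\Gamma}A_\Gamma^{-1}A_{\Gamma I}$, $A_\Gamma=R_\Gamma^\top R_\Gamma$ the Cholesky factorization, and $K=R_\Gamma^{-\top}A_{\Gamma I}S_I^{-1}A_{I\Gamma}R_\Gamma^{-1}$. Let $U_k\in\mathbb{R}^{n_\Gamma\times k}$ have orthonormal columns that are eigenvectors of $K$ with $KU_k=U_k\Sigma_k$, $\Sigma_k$ diagonal, and set $\mathcal{P}_1=I+U_k\Sigma_kU_k^\top$ and $B=R_\Gamma^{-\top}S_\Gamma R_\Gamma^{-1}$. Then $$\mathcal{P}_1B=B-U_k(I+\Sigma_k)^{-1}U_k^\top+U_kU_k^\top,$$ so that $\mathcal{P}_1B$ acts as the identity on the column space of $U_k$ and coincides with $B$ on its orthogonal complement (which is $B$-invariant). Moreover $\mathcal{P}_1B$ is spectrally equivalent to $\mathcal{M}_1S_\Gamma$ where $\mathcal{M}_1=A_\Gamma^{-1}+\breve Z_k\Sigma_k\breve Z_k^\top$ with $\breve Z_k=R_\Gamma^{-1}U_k$.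
   Context: $S_\Gamma$ and $S_I$ are the Schur complements of $A$ with respect to $A_\Gamma$ and $A_I$; $K$ is symmetric positive semidefinite and $R_\Gamma S_\Gamma^{-1}R_\Gamma^\top=I+K$. "Spectrally equivalent" means having the same eigenvalues with multiplicities. *)

theory Defs
  imports "Jordan_Normal_Form.Char_Poly" "Jordan_Normal_Form.Gauss_Jordan_Elimination"
begin

(* Matrix inverse (meaningful for invertible square matrices; junk value 0 otherwise). *)
definition mat_inv :: "real mat \<Rightarrow> real mat" where
  "mat_inv A = (case mat_inverse A of Some B \<Rightarrow> B | None \<Rightarrow> 0\<^sub>m (dim_row A) (dim_col A))"

definition spd_mat :: "nat \<Rightarrow> real mat \<Rightarrow> bool" where
  "spd_mat n A \<longleftrightarrow> A \<in> carrier_mat n n \<and> A\<^sup>T = A \<and>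
     (\<forall>x \<in> carrier_vec n. x \<noteq> 0\<^sub>v n \<longrightarrow> x \<bullet> (A *\<^sub>v x) > 0)"

definition cholesky_factor :: "nat \<Rightarrow> real mat \<Rightarrow> real mat \<Rightarrow> bool" where
  "cholesky_factor n A R \<longleftrightarrow> R \<in> carrier_mat n n \<and> upper_triangular R \<and>
     (\<forall>i < n. R $$ (i,i) > 0) \<and> A = R\<^sup>T * R"

end

theory Submission
  imports Defs
begin

lemma massoc: "dim_col A = dim_row B \<Longrightarrow> dim_col B = dim_row C \<Longrightarrow> A * B * C = A * (B * C)"
  by (rule assoc_mult_mat[of A "dim_row A" "dim_col A" B "dim_col B" C "dim_col C"], auto)

lemma dl_add: "dim_col A = dim_row B \<Longrightarrow> dim_row C = dim_row B \<Longrightarrow> dim_col C = dim_col B \<Longrightarrow> A * (B + C) = A * B + A * C"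
  by (rule mult_add_distrib_mat[of A "dim_row A" "dim_col A" B "dim_col B"], auto)
lemma dr_add: "dim_row A = dim_row B \<Longrightarrow> dim_col A = dim_col B \<Longrightarrow> dim_col B = dim_row C \<Longrightarrow> (A + B) * C = A * C + B * C"
  by (rule add_mult_distrib_mat[of A "dim_row A" "dim_col A" B C "dim_col C"], auto)
lemma dl_minus: "dim_col A = dim_row B \<Longrightarrow> dim_row C = dim_row B \<Longrightarrow> dim_col C = dim_col B \<Longrightarrow> A * (B - C) = A * B - (A * C :: real mat)"
  by (rule mult_minus_distrib_mat[of A "dim_row A" "dim_col A" B "dim_col B"], auto)
lemma dr_minus: "dim_row A = dim_row B \<Longrightarrow> dim_col A = dim_col B \<Longrightarrow> dim_col B = dim_row C \<Longrightarrow> (A - B) * C = A * C - (B * C :: real mat)"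
  by (rule minus_mult_distrib_mat[of A "dim_row A" "dim_col A" B C "dim_col C"], auto)
lemma tr_mult: "dim_col A = dim_row B \<Longrightarrow> (A * B :: real mat)\<^sup>T = B\<^sup>T * A\<^sup>T"
  by (rule transpose_mult[of A "dim_row A" "dim_col A" B "dim_col B"], auto)
lemma tr_add: "dim_row A = dim_row B \<Longrightarrow> dim_col A = dim_col B \<Longrightarrow> (A + B :: real mat)\<^sup>T = A\<^sup>T + B\<^sup>T"
  by (rule transpose_add[of A "dim_row A" "dim_col A"], auto)
lemma tr_minus: "dim_row A = dim_row B \<Longrightarrow> dim_col A = dim_col B \<Longrightarrow> (A - B :: real mat)\<^sup>T = A\<^sup>T - B\<^sup>T"
  by (rule transpose_minus[of A "dim_row A" "dim_col A"], auto)

lemma mat_inv_props: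
  assumes A: "A \<in> carrier_mat n n" and d: "det A \<noteq> 0"
  shows "mat_inv A \<in> carrier_mat n n \<and> A * mat_inv A = 1\<^sub>m n \<and> mat_inv A * A = 1\<^sub>m n"
proof -
  have "A \<in> Units (ring_mat TYPE(real) n ())" by (rule det_non_zero_imp_unit[OF A d])
  then obtain B where "mat_inverse A = Some B" using mat_inverse(1)[OF A] by (metis option.exhaust)
  with mat_inverse(2)[OF A this] show ?thesis unfolding mat_inv_def by auto
qed

lemma mat_inv_unique:
  assumes A: "A \<in> carrier_mat n n" and B: "B \<in> carrier_mat n n" and AB: "A * B = 1\<^sub>m n"
  shows "mat_inv A = B"
proof -
  have "det A * det B = 1" using det_mult[OF A B] AB by simp
  hence "det A \<noteq> 0" by auto
  from mat_inv_props[OF A this] have C: "mat_inv A \<in> carrier_mat n n" "mat_inv A * A = 1\<^sub>m n" by auto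
  have "mat_inv A = mat_inv A * (A * B)" using AB C by simp
  also have "\<dots> = (mat_inv A * A) * B" using C A B by (subst massoc) auto
  also have "\<dots> = B" using C B by simp
  finally show ?thesis .
qed

lemma det_nz_kernel:
  assumes A: "(A::real mat) \<in> carrier_mat n n" and k: "\<And>v. v \<in> carrier_vec n \<Longrightarrow> A *\<^sub>v v = 0\<^sub>v n \<Longrightarrow> v = 0\<^sub>v n"
  shows "det A \<noteq> 0"
  using det_0_iff_vec_prod_zero_field[OF A] k by blast

lemma mat_vec_zero: "(A::real mat) \<in> carrier_mat nr nc \<Longrightarrow> A *\<^sub>v 0\<^sub>v nc = 0\<^sub>v nr"
  by (intro eq_vecI) (auto simp: scalar_prod_def)

lemma inv_cancel: "A * B = 1\<^sub>m n \<Longrightarrow> A \<in> carrier_mat n n \<Longrightarrow> B \<in> carrier_mat n n \<Longrightarrow> dim_row C = n \<Longrightarrow> A * (B * C) = (C :: real mat)"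
  by (subst massoc[symmetric]) auto

theorem mainTheorem4:
  fixes nI nG k :: nat
    and AI AIG AGI AG RG U Sig :: "real mat"
  assumes AI: "AI \<in> carrier_mat nI nI"
    and AIG: "AIG \<in> carrier_mat nI nG"
    and AGI: "AGI \<in> carrier_mat nG nI"
    and AG: "AG \<in> carrier_mat nG nG"
    and AIG_T: "AIG = AGI\<^sup>T"
    and A_spd: "spd_mat (nI + nG) (four_block_mat AI AIG AGI AG)"
    and chol: "cholesky_factor nG AG RG"
    and U: "U \<in> carrier_mat nG k"
    and U_orth: "U\<^sup>T * U = 1\<^sub>m k"
    and Sig: "Sig \<in> carrier_mat k k"
    and Sig_diag: "diagonal_mat Sig"
    and eig: "((mat_inv RG)\<^sup>T * AGI * mat_inv (AI - AIG * mat_inv AG * AGI) * AIG * mat_inv RG) * U = U * Sig"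
  defines "P1 \<equiv> 1\<^sub>m nG + U * Sig * U\<^sup>T"
    and "B \<equiv> (mat_inv RG)\<^sup>T * (AG - AGI * mat_inv AI * AIG) * mat_inv RG"
    and "M1 \<equiv> mat_inv AG + (mat_inv RG * U) * Sig * (mat_inv RG * U)\<^sup>T"
  shows "P1 * B = B - U * mat_inv (1\<^sub>m k + Sig) * U\<^sup>T + U * U\<^sup>T
    \<and> (\<forall>y \<in> carrier_vec k. (P1 * B) *\<^sub>v (U *\<^sub>v y) = U *\<^sub>v y)
    \<and> (\<forall>x \<in> carrier_vec nG. U\<^sup>T *\<^sub>v x = 0\<^sub>v k \<longrightarrow>
           (P1 * B) *\<^sub>v x = B *\<^sub>v x \<and> U\<^sup>T *\<^sub>v (B *\<^sub>v x) = 0\<^sub>v k)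
    \<and> char_poly (P1 * B) = char_poly (M1 * (AG - AGI * mat_inv AI * AIG))"
proof -
  let ?m = nI and ?n = nG
  let ?A = "four_block_mat AI AIG AGI AG"
  have RG: "RG \<in> carrier_mat nG nG" and RGut: "upper_triangular RG"
    and RGd: "\<forall>i<nG. RG $$ (i,i) > 0" and AGR: "AG = RG\<^sup>T * RG"
    using chol unfolding cholesky_factor_def by auto
  have "det RG = prod_list (diag_mat RG)" by (rule det_upper_triangular[OF RGut RG])
  moreover have "0 \<notin> set (diag_mat RG)" using RGd RG unfolding diag_mat_def by auto
  ultimately have detRG: "det RG \<noteq> 0" by (simp add: prod_list_zero_iff)
  define Ri where "Ri = mat_inv RG"
  have Ri: "Ri \<in> carrier_mat nG nG" and RRi: "RG * Ri = 1\<^sub>m nG" and RiR: "Ri * RG = 1\<^sub>m nG"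
    using mat_inv_props[OF RG detRG] unfolding Ri_def by auto
  have RtRit: "RG\<^sup>T * Ri\<^sup>T = 1\<^sub>m nG" using tr_mult[of Ri RG] RiR RG Ri by simp
  have RitRt: "Ri\<^sup>T * RG\<^sup>T = 1\<^sub>m nG" using tr_mult[of RG Ri] RRi RG Ri by simp
  define AGi where "AGi = mat_inv AG"
  have AGi_eq: "AGi = Ri * Ri\<^sup>T"
  proof -
    have "AG * (Ri * Ri\<^sup>T) = RG\<^sup>T * ((RG * Ri) * Ri\<^sup>T)" unfolding AGR using RG Ri by (simp add: massoc)
    also have "\<dots> = 1\<^sub>m nG" using RRi RtRit RG Ri by simp
    finally show ?thesis unfolding AGi_def using mat_inv_unique[OF AG, of "Ri * Ri\<^sup>T"] Ri by auto
  qed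
  have AGi: "AGi \<in> carrier_mat nG nG" using AGi_eq Ri by auto
  have AGAGi: "AG * AGi = 1\<^sub>m nG"
  proof -
    have "AG * AGi = RG\<^sup>T * ((RG * Ri) * Ri\<^sup>T)" unfolding AGR AGi_eq using RG Ri by (simp add: massoc)
    also have "\<dots> = 1\<^sub>m nG" using RRi RtRit RG Ri by simp
    finally show ?thesis .
  qed
  have AGiAG: "AGi * AG = 1\<^sub>m nG" using mat_mult_left_right_inverse[OF AG AGi AGAGi] .
  have Asym: "?A\<^sup>T = ?A" and Apos: "\<And>v. v \<in> carrier_vec (nI+nG) \<Longrightarrow> v \<noteq> 0\<^sub>v (nI+nG) \<Longrightarrow> v \<bullet> (?A *\<^sub>v v) > 0"
    using A_spd unfolding spd_mat_def by auto
  have kern: "x = 0\<^sub>v nI" if x: "x \<in> carrier_vec nI" and y: "y \<in> carrier_vec nG"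
    and e1: "AI *\<^sub>v x + AIG *\<^sub>v y = 0\<^sub>v nI" and e2: "y = 0\<^sub>v nG \<or> AGI *\<^sub>v x + AG *\<^sub>v y = 0\<^sub>v nG" for x y
  proof (rule ccontr)
    assume "x \<noteq> 0\<^sub>v nI"
    then obtain i where i: "i < nI" "x $ i \<noteq> 0" using x by (metis eq_vecI carrier_vecD index_zero_vec(1,2))
    have xy: "x @\<^sub>v y \<in> carrier_vec (nI+nG)" using x y by simp
    have "(x @\<^sub>v y) $ i \<noteq> 0" using i x y by simp
    hence nz: "x @\<^sub>v y \<noteq> 0\<^sub>v (nI+nG)" using i by auto
    have "?A *\<^sub>v (x @\<^sub>v y) = (AI *\<^sub>v x + AIG *\<^sub>v y) @\<^sub>v (AGI *\<^sub>v x + AG *\<^sub>v y)"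
      by (rule four_block_mat_mult_vec[OF AI AIG AGI AG x y])
    hence "(x @\<^sub>v y) \<bullet> (?A *\<^sub>v (x @\<^sub>v y)) = x \<bullet> (AI *\<^sub>v x + AIG *\<^sub>v y) + y \<bullet> (AGI *\<^sub>v x + AG *\<^sub>v y)"
      using scalar_prod_append[OF x y, of "AI *\<^sub>v x + AIG *\<^sub>v y" "AGI *\<^sub>v x + AG *\<^sub>v y"] AI AIG AGI AG x y by simp
    also have "\<dots> = 0" using e1 e2 x y AGI AG by auto
    finally show False using Apos[OF xy nz] by simp
  qed
  have AIsym: "AI\<^sup>T = AI"
  proof (rule eq_matI)
    fix i j assume ij: "i < dim_row AI" "j < dim_col AI"
    have "?A\<^sup>T $$ (i,j) = ?A $$ (i,j)" using Asym by simp
    thus "AI\<^sup>T $$ (i,j) = AI $$ (i,j)" using ij AI AIG AGI AG by simp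
  qed (use AI in auto)
  define AIi where "AIi = mat_inv AI"
  have "det AI \<noteq> 0"
  proof (rule det_nz_kernel[OF AI])
    fix v assume v: "v \<in> carrier_vec nI" "AI *\<^sub>v v = 0\<^sub>v nI"
    show "v = 0\<^sub>v nI" by (rule kern[OF v(1) zero_carrier_vec]) (use v AIG mat_vec_zero[OF AIG] in auto)
  qed
  from mat_inv_props[OF AI this] have AIi: "AIi \<in> carrier_mat nI nI" and AIAIi: "AI * AIi = 1\<^sub>m nI"
    and AIiAI: "AIi * AI = 1\<^sub>m nI" unfolding AIi_def by auto
  have AIisym: "AIi\<^sup>T = AIi"
  proof -
    have "AI * AIi\<^sup>T = (AIi * AI)\<^sup>T" using tr_mult[of AIi AI] AIsym AI AIi by simp
    hence "AI * AIi\<^sup>T = 1\<^sub>m nI" using AIiAI by simp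
    from mat_inv_unique[OF AI _ this] AIi show ?thesis unfolding AIi_def by auto
  qed
  define SI where "SI = AI - AIG * AGi * AGI"
  have SI: "SI \<in> carrier_mat nI nI" unfolding SI_def using AI AIG AGi AGI by auto
  have detSI: "det SI \<noteq> 0"
  proof (rule det_nz_kernel[OF SI])
    fix x assume x: "x \<in> carrier_vec nI" and Sx: "SI *\<^sub>v x = 0\<^sub>v nI"
    define w where "w = AGi *\<^sub>v (AGI *\<^sub>v x)"
    have w: "w \<in> carrier_vec nG" unfolding w_def using AGi AGI x by auto
    define z where "z = (AIG * AGi * AGI) *\<^sub>v x"
    have z: "z \<in> carrier_vec nI" unfolding z_def using AIG AGi AGI x by (meson mult_carrier_mat mult_mat_vec_carrier)
    have zw: "AIG *\<^sub>v w = z" unfolding z_def w_def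
      using assoc_mult_mat_vec[OF mult_carrier_mat[OF AIG AGi] AGI x] assoc_mult_mat_vec[OF AIG AGi mult_mat_vec_carrier[OF AGI x]] by (simp only:)
    have "SI *\<^sub>v x = AI *\<^sub>v x - z" unfolding SI_def z_def
      by (rule minus_mult_distrib_mat_vec[OF AI _ x]) (use AIG AGi AGI in auto)
    hence eq0: "AI *\<^sub>v x - z = 0\<^sub>v nI" using Sx by simp
    have AIx: "AI *\<^sub>v x = z"
    proof (rule eq_vecI)
      fix i assume i: "i < dim_vec z"
      have "(AI *\<^sub>v x - z) $ i = 0\<^sub>v nI $ i" using eq0 by simp
      thus "(AI *\<^sub>v x) $ i = z $ i" using i z AI x by simp
    qed (use z AI in simp)
    show "x = 0\<^sub>v nI"
    proof (rule kern[OF x smult_carrier_vec[of "-1", THEN iffD2, OF w]])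
      show "AI *\<^sub>v x + AIG *\<^sub>v ((-1) \<cdot>\<^sub>v w) = 0\<^sub>v nI"
        unfolding mult_mat_vec[OF AIG w] zw AIx by (intro eq_vecI) (use z in auto)
      have "AG *\<^sub>v w = AGI *\<^sub>v x" unfolding w_def using AG AGi AGI x AGAGi
        by (metis assoc_mult_mat_vec mult_mat_vec_carrier one_mult_mat_vec)
      thus "(-1) \<cdot>\<^sub>v w = 0\<^sub>v nG \<or> AGI *\<^sub>v x + AG *\<^sub>v ((-1) \<cdot>\<^sub>v w) = 0\<^sub>v nG"
        unfolding mult_mat_vec[OF AG w] by (intro disjI2 eq_vecI) (use AGI x in auto)
    qed
  qed
  define SIi where "SIi = mat_inv SI"
  from mat_inv_props[OF SI detSI] have SIi: "SIi \<in> carrier_mat nI nI" and SISIi: "SI * SIi = 1\<^sub>m nI"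
    and SIiSI: "SIi * SI = 1\<^sub>m nI" unfolding SIi_def by auto
  define SG where "SG = AG - AGI * AIi * AIG"
  have SG: "SG \<in> carrier_mat nG nG" unfolding SG_def using AG AIG AGI AIi by auto
  define X where "X = AGi + AGi * AGI * SIi * AIG * AGi"
  have X: "X \<in> carrier_mat nG nG" unfolding X_def using AGi AIG AGI SIi by auto
  note c1 = inv_cancel[OF AGAGi AG AGi] inv_cancel[OF AIiAI AIi AI] inv_cancel[OF SISIi SI SIi]
  have SIrel: "AIG * (AGi * AGI) = AI - SI" unfolding SI_def
    by (intro eq_matI) (use AI AIG AGi AGI in \<open>auto simp: massoc\<close>)
  have F1: "AIi * (AIG * (AGi * (AGI * (SIi * C)))) = SIi * C - AIi * C" if C: "dim_row C = nI" for C
  proof -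
    have "AIi * (AIG * (AGi * (AGI * (SIi * C)))) = AIi * ((AIG * (AGi * AGI)) * (SIi * C))"
      using AI AIG AGi AGI SIi C by (simp add: massoc)
    also have "\<dots> = AIi * ((AI - SI) * (SIi * C))" unfolding SIrel ..
    also have "\<dots> = SIi * C - AIi * C"
      using AI SI SIi AIi C c1 by (simp add: dl_minus dr_minus)
    finally show ?thesis .
  qed
  have SGX: "SG * X = 1\<^sub>m nG"
  proof -
    have "SG * X = 1\<^sub>m nG - AGI * (AIi * (AIG * AGi)) + (AGI * (SIi * (AIG * AGi)) - (AGI * (SIi * (AIG * AGi)) - AGI * (AIi * (AIG * AGi))))"
      unfolding SG_def X_def using AG AIG AGI AIi AGi SIi AI c1 F1
      by (simp add: massoc dl_minus dr_minus dl_add dr_add AGAGi)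
    also have "\<dots> = 1\<^sub>m nG"
      by (intro eq_matI) (use AIG AGI AIi AGi SIi in \<open>auto simp: dl_minus\<close>)
    finally show ?thesis .
  qed
  define Rit where "Rit = Ri\<^sup>T"
  have Rit: "Rit \<in> carrier_mat nG nG" unfolding Rit_def using Ri by auto
  note RitRt' = RitRt[folded Rit_def] and RtRit' = RtRit[folded Rit_def]
  define K where "K = Rit * AGI * SIi * AIG * Ri"
  have K: "K \<in> carrier_mat nG nG" unfolding K_def using Rit AGI SIi AIG Ri by auto
  have eig': "K * U = U * Sig" using eig unfolding K_def Rit_def Ri_def AGi_def SI_def SIi_def .
  have Bdef: "B = Rit * SG * Ri" unfolding B_def Rit_def Ri_def SG_def AIi_def ..
  have Bc: "B \<in> carrier_mat nG nG" unfolding Bdef using Rit SG Ri by auto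
  note c2 = inv_cancel[OF RRi RG Ri] inv_cancel[OF RiR Ri RG] inv_cancel[OF RitRt' Rit] inv_cancel[OF RtRit' _ Rit]
  note c3 = inv_cancel[OF SGX SG X]
  have IK: "1\<^sub>m nG + K = RG * X * RG\<^sup>T"
    unfolding X_def AGi_eq K_def Rit_def[symmetric] using RG Ri Rit AGI SIi AIG c2 RitRt' RRi
    by (simp add: massoc dl_add dr_add)
  have BIK: "B * (1\<^sub>m nG + K) = 1\<^sub>m nG"
    unfolding IK Bdef using RG Ri Rit SG X c2 c3 RitRt' by (simp add: massoc)
  have IKB: "(1\<^sub>m nG + K) * B = 1\<^sub>m nG"
    by (rule mat_mult_left_right_inverse[OF Bc _ BIK]) (use K in auto)
  have IKU: "(1\<^sub>m nG + K) * U = U * (1\<^sub>m k + Sig)"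
    using K U Sig eig' by (simp add: dl_add dr_add)
  have BUS: "B * U * (1\<^sub>m k + Sig) = U"
  proof -
    have "B * U * (1\<^sub>m k + Sig) = B * ((1\<^sub>m nG + K) * U)" unfolding IKU using Bc U Sig by (simp add: massoc)
    also have "\<dots> = (B * (1\<^sub>m nG + K)) * U" using Bc U K by (simp add: massoc)
    finally show ?thesis using BIK U by simp
  qed
  have IS: "1\<^sub>m k + Sig \<in> carrier_mat k k" using Sig by auto
  have detIS: "det (1\<^sub>m k + Sig) \<noteq> 0"
  proof (rule det_nz_kernel[OF IS])
    fix y assume y: "y \<in> carrier_vec k" and e: "(1\<^sub>m k + Sig) *\<^sub>v y = 0\<^sub>v k"
    have "U *\<^sub>v y = (B * U * (1\<^sub>m k + Sig)) *\<^sub>v y" using BUS by simp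
    also have "\<dots> = (B * U) *\<^sub>v ((1\<^sub>m k + Sig) *\<^sub>v y)"
      by (rule assoc_mult_mat_vec[OF _ IS y]) (use Bc U in auto)
    also have "\<dots> = 0\<^sub>v nG" unfolding e by (rule mat_vec_zero) (use Bc U in auto)
    finally have Uy: "U *\<^sub>v y = 0\<^sub>v nG" .
    have "y = (U\<^sup>T * U) *\<^sub>v y" using U_orth y by simp
    also have "\<dots> = U\<^sup>T *\<^sub>v (U *\<^sub>v y)" by (rule assoc_mult_mat_vec[OF _ U y]) (use U in auto)
    also have "\<dots> = 0\<^sub>v k" unfolding Uy by (rule mat_vec_zero) (use U in auto)
    finally show "y = 0\<^sub>v k" .
  qed
  define D where "D = mat_inv (1\<^sub>m k + Sig)"
  from mat_inv_props[OF IS detIS] have D: "D \<in> carrier_mat k k" and ISD: "(1\<^sub>m k + Sig) * D = 1\<^sub>m k"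
    and DIS: "D * (1\<^sub>m k + Sig) = 1\<^sub>m k" unfolding D_def by auto
  have BU: "B * U = U * D"
  proof -
    have "B * U = B * U * ((1\<^sub>m k + Sig) * D)" unfolding ISD using Bc U by simp
    also have "\<dots> = (B * U * (1\<^sub>m k + Sig)) * D" using Bc U Sig D by (simp add: massoc)
    finally show ?thesis unfolding BUS .
  qed
  have SigT: "Sig\<^sup>T = Sig"
    by (intro eq_matI) (use Sig Sig_diag in \<open>auto simp: diagonal_mat_def, metis\<close>)
  have DT: "D\<^sup>T = D"
  proof -
    have "(1\<^sub>m k + Sig) * D\<^sup>T = (D * (1\<^sub>m k + Sig))\<^sup>T"
      using tr_mult[of D "1\<^sub>m k + Sig"] tr_add[of "1\<^sub>m k" Sig] SigT D Sig by simp
    hence "(1\<^sub>m k + Sig) * D\<^sup>T = 1\<^sub>m k" unfolding DIS by simp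
    from mat_inv_unique[OF IS _ this] D show ?thesis unfolding D_def by auto
  qed
  have AGT: "AG\<^sup>T = AG" unfolding AGR using RG by (simp add: tr_mult)
  have SGT: "SG\<^sup>T = SG" unfolding SG_def using AG AGI AIG AIi AGT AIisym AIG_T
    by (simp add: tr_minus tr_mult massoc)
  have BT: "B\<^sup>T = B" unfolding Bdef Rit_def using Ri SG SGT by (simp add: tr_mult massoc)
  have UTB: "U\<^sup>T * B = D * U\<^sup>T"
  proof -
    have "U\<^sup>T * B = (B * U)\<^sup>T" using tr_mult[of B U] BT Bc U by simp
    also have "\<dots> = D * U\<^sup>T" unfolding BU using tr_mult[of U D] DT U D by simp
    finally show ?thesis .
  qed
  have SigD: "Sig * D = 1\<^sub>m k - D"
  proof -
    have "D + Sig * D = 1\<^sub>m k" using ISD D Sig by (simp add: dr_add)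
    note eq = this
    show ?thesis
    proof (intro eq_matI)
      fix i j assume ij: "i < dim_row (1\<^sub>m k - D)" "j < dim_col (1\<^sub>m k - D)"
      have "(D + Sig * D) $$ (i,j) = 1\<^sub>m k $$ (i,j)" using eq by simp
      thus "(Sig * D) $$ (i,j) = (1\<^sub>m k - D) $$ (i,j)" using ij D Sig by (auto split: if_splits)
    qed (use D Sig in auto)
  qed
  have UT: "U\<^sup>T \<in> carrier_mat k nG" using U by auto
  have ID: "1\<^sub>m k - D \<in> carrier_mat k k" using D by auto
  have P1B: "P1 * B = B + U * ((1\<^sub>m k - D) * U\<^sup>T)"
  proof -
    have "P1 * B = B + U * (Sig * (U\<^sup>T * B))" unfolding P1_def using U Sig Bc by (simp add: dr_add massoc)
    also have "\<dots> = B + U * ((Sig * D) * U\<^sup>T)" unfolding UTB using U Sig D by (simp add: massoc)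
    finally show ?thesis unfolding SigD .
  qed
  have P1Bc: "P1 * B \<in> carrier_mat nG nG" unfolding P1B using Bc U D by auto
  have part1: "P1 * B = B - U * mat_inv (1\<^sub>m k + Sig) * U\<^sup>T + U * U\<^sup>T"
  proof -
    have "P1 * B = B + (U * U\<^sup>T - U * (D * U\<^sup>T))" unfolding P1B using U D by (simp add: dl_minus dr_minus)
    also have "\<dots> = B - U * (D * U\<^sup>T) + U * U\<^sup>T"
      by (intro eq_matI) (use Bc U D in auto)
    also have "\<dots> = B - U * mat_inv (1\<^sub>m k + Sig) * U\<^sup>T + U * U\<^sup>T"
      unfolding D_def[symmetric] using U D by (simp add: massoc)
    finally show ?thesis .
  qed
  have P1BU: "P1 * B * U = U"
  proof -
    have "P1 * B * U = U * D + (U - U * D)" unfolding P1B using Bc U D U_orth BU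
      by (simp add: massoc dr_add dl_minus dr_minus)
    also have "\<dots> = U" by (intro eq_matI) (use U D in auto)
    finally show ?thesis .
  qed
  have part2: "\<forall>y::real vec \<in> carrier_vec k. (P1 * B) *\<^sub>v (U *\<^sub>v y) = U *\<^sub>v y"
  proof
    fix y :: "real vec" assume y: "y \<in> carrier_vec k"
    have "(P1 * B) *\<^sub>v (U *\<^sub>v y) = (P1 * B * U) *\<^sub>v y"
      by (rule assoc_mult_mat_vec[symmetric, OF P1Bc U y])
    thus "(P1 * B) *\<^sub>v (U *\<^sub>v y) = U *\<^sub>v y" unfolding P1BU .
  qed
  have part3: "\<forall>x::real vec \<in> carrier_vec nG. U\<^sup>T *\<^sub>v x = 0\<^sub>v k \<longrightarrow>
           (P1 * B) *\<^sub>v x = B *\<^sub>v x \<and> U\<^sup>T *\<^sub>v (B *\<^sub>v x) = 0\<^sub>v k"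
  proof (intro ballI impI conjI)
    fix x :: "real vec" assume x: "x \<in> carrier_vec nG" and Ux: "U\<^sup>T *\<^sub>v x = 0\<^sub>v k"
    have W: "U * ((1\<^sub>m k - D) * U\<^sup>T) \<in> carrier_mat nG nG" using U D by auto
    have "(U * ((1\<^sub>m k - D) * U\<^sup>T)) *\<^sub>v x = U *\<^sub>v ((1\<^sub>m k - D) *\<^sub>v (U\<^sup>T *\<^sub>v x))"
      using assoc_mult_mat_vec[OF U mult_carrier_mat[OF ID UT] x] assoc_mult_mat_vec[OF ID UT x] by (simp only:)
    also have "\<dots> = 0\<^sub>v nG" unfolding Ux using mat_vec_zero[OF ID] mat_vec_zero[OF U] by simp
    finally have "(U * ((1\<^sub>m k - D) * U\<^sup>T)) *\<^sub>v x = 0\<^sub>v nG" .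
    thus "(P1 * B) *\<^sub>v x = B *\<^sub>v x" unfolding P1B
      using add_mult_distrib_mat_vec[OF Bc W x] Bc x by simp
    have "U\<^sup>T *\<^sub>v (B *\<^sub>v x) = (U\<^sup>T * B) *\<^sub>v x" by (rule assoc_mult_mat_vec[symmetric, OF UT Bc x])
    also have "\<dots> = D *\<^sub>v (U\<^sup>T *\<^sub>v x)" unfolding UTB by (rule assoc_mult_mat_vec[OF D UT x])
    also have "\<dots> = 0\<^sub>v k" unfolding Ux by (rule mat_vec_zero[OF D])
    finally show "U\<^sup>T *\<^sub>v (B *\<^sub>v x) = 0\<^sub>v k" .
  qed
  have SGdef: "AG - AGI * mat_inv AI * AIG = SG" unfolding SG_def AIi_def ..
  have P1: "P1 \<in> carrier_mat nG nG" unfolding P1_def using U Sig by auto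
  have M1eq: "M1 = Ri * P1 * Rit"
  proof -
    have "M1 = Ri * Rit + Ri * U * Sig * (U\<^sup>T * Rit)"
      unfolding M1_def AGi_def[symmetric] AGi_eq Ri_def[symmetric] Rit_def using tr_mult[of Ri U] Ri U by simp
    also have "\<dots> = Ri * P1 * Rit" unfolding P1_def using Ri Rit U Sig by (simp add: massoc dl_add dr_add)
    finally show ?thesis .
  qed
  have sim: "M1 * SG = Ri * (P1 * B) * RG"
    unfolding M1eq Bdef using Ri Rit P1 SG RG RiR by (simp add: massoc)
  have "similar_mat (M1 * SG) (P1 * B)"
    unfolding similar_mat_def similar_mat_wit_def
    by (rule exI[of _ Ri], rule exI[of _ RG]) (use sim Ri RG P1Bc RRi RiR P1 SG in \<open>auto simp: M1eq Rit\<close>)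
  from char_poly_similar[OF this] have part4: "char_poly (P1 * B) = char_poly (M1 * (AG - AGI * mat_inv AI * AIG))"
    unfolding SGdef by simp
  show ?thesis using part1 part2 part3 part4 by blast
qed
end
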